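(* Assume $\mathbf a,\mathbf b\in\Delta^n$ with strictly positive entries, let $\eta>0$, let $X^\eta$ be the unique minimizer of $g_\eta$ over $\mathbb{R}^{n\times n}_+$, and set $\gamma=\|C\|_\infty+2\eta$. Then $$\|X^\eta\mathbf 1_n-\mathbf a\|_1\le\frac{n\gamma}{\tau},\qquad \|(X^\eta)^\top\mathbf 1_n-\mathbf b\|_1\le\frac{n\gamma}{\tau}.$$
   Context: Let $n\ge1$, $C\in\mathbb{R}^{n\times n}$ with nonnegative entries and $\|C\|_\infty=\max_{i,j}|C_{ij}|$; $\tau>0$; $\Delta^n=\{\mathbf x\in\mathbb{R}^n_+:\sum_i x_i=1\}$. For $\mathbf x\in\mathbb{R}^n_+$ and $\mathbf y$ with positive entries, $\mathbf{KL}(\mathbf x\|\mathbf y)=\sum_i x_i\log(x_i/y_i)-x_i+y_i$ (with $0\log0=0$). $\|X\|_2$ is the Frobenius norm, $\mathbf 1_n$ the all-ones vector. $g_\eta(X)=\langle C,X\rangle+\eta\|X\|_2^2+\tau\mathbf{KL}(X\mathbf 1_n\|\mathbf a)+\tau\mathbf{KL}(X^\top\mathbf 1_n\|\mathbf b)$ for $X\in\mathbb{R}^{n\times n}_+$. *)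

theory Defs
  imports "HOL-Analysis.Analysis"
begin

text \<open>n x n real matrices are rendered as real^'n^'n with 'n a finite index type (n = CARD('n)).\<close>

definition row_sums :: "real^'n^'n::finite \<Rightarrow> real^'n" where
  "row_sums X = (\<chi> i. \<Sum>j\<in>UNIV. X $ i $ j)"

definition col_sums :: "real^'n^'n::finite \<Rightarrow> real^'n" where
  "col_sums X = (\<chi> j. \<Sum>i\<in>UNIV. X $ i $ j)"

definition in_simplex :: "real^'n::finite \<Rightarrow> bool" where
  "in_simplex x \<longleftrightarrow> (\<forall>i. 0 \<le> x $ i) \<and> (\<Sum>i\<in>UNIV. x $ i) = 1"

definition nonneg_mat :: "real^'n^'n::finite \<Rightarrow> bool" where
  "nonneg_mat X \<longleftrightarrow> (\<forall>i j. 0 \<le> X $ i $ j)"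

definition KL :: "real^'n::finite \<Rightarrow> real^'n \<Rightarrow> real" where
  "KL x y = (\<Sum>i\<in>UNIV. (if x $ i = 0 then 0 else x $ i * ln (x $ i / y $ i)) - x $ i + y $ i)"

definition frob_sq :: "real^'n^'n::finite \<Rightarrow> real" where
  "frob_sq X = (\<Sum>i\<in>UNIV. \<Sum>j\<in>UNIV. (X $ i $ j)^2)"

definition frob_inner :: "real^'n^'n::finite \<Rightarrow> real^'n^'n \<Rightarrow> real" where
  "frob_inner C X = (\<Sum>i\<in>UNIV. \<Sum>j\<in>UNIV. C $ i $ j * X $ i $ j)"

definition max_abs_norm :: "real^'n^'n::finite \<Rightarrow> real" where
  "max_abs_norm C = Max {\<bar>C $ i $ j\<bar> | i j. True}"

definition norm1 :: "real^'n::finite \<Rightarrow> real" where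
  "norm1 x = (\<Sum>i\<in>UNIV. \<bar>x $ i\<bar>)"

definition g_eta :: "real^'n^'n::finite \<Rightarrow> real \<Rightarrow> real \<Rightarrow> real^'n \<Rightarrow> real^'n \<Rightarrow> real^'n^'n \<Rightarrow> real" where
  "g_eta C \<tau> \<eta> a b X = frob_inner C X + \<eta> * frob_sq X
      + \<tau> * KL (row_sums X) a + \<tau> * KL (col_sums X) b"

end

theory Submission
  imports Defs
begin

lemma kterm:
  fixes x y a :: real
  assumes "a > 0" "x \<ge> 0" "y \<ge> 0" "y > 0 \<or> y = x"
  shows "((if y=0 then 0 else y*ln(y/a)) - y + a) - ((if x=0 then 0 else x*ln(x/a)) - x + a) \<le> (y-x)*ln(y/a)"
proof (cases "y = x")
  case True then show ?thesis by simp
next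
  case False
  then have y: "y > 0" using assms by auto
  show ?thesis
  proof (cases "x = 0")
    case True then show ?thesis using y by simp
  next
    case False
    then have x: "x > 0" using assms by auto
    have "ln (y/x) \<le> y/x - 1" using x y by (intro ln_le_minus_one) simp
    then have "x * ln (y/x) \<le> x * (y/x - 1)" using x by (simp add: mult_left_mono)
    also have "\<dots> = y - x" using x by (simp add: field_simps)
    finally have h: "x * ln (y/x) \<le> y - x" .
    have "ln (y/x) = ln (y/a) - ln (x/a)" using x y assms(1) by (simp add: ln_div)
    then have "x*ln(y/a) = x*ln(y/x) + x*ln(x/a)" by (simp add: algebra_simps flip: distrib_left)
    moreover have "(y - x) * ln (y / a) = y * ln (y / a) - x * ln (y/a)" by (simp add: algebra_simps)
    ultimately show ?thesis using h x y by simp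
  qed
qed

lemma rlog:
  fixes r a t :: real
  assumes "r \<ge> 0" "a > 0" "t > 0"
  shows "r * ln (t*r/a) \<ge> r - a/t"
proof (cases "r = 0")
  case True then show ?thesis using assms by simp
next
  case False
  then have r: "r > 0" using assms by auto
  have "ln (a/(t*r)) \<le> a/(t*r) - 1" using r assms by (intro ln_le_minus_one) simp
  moreover have "ln (a/(t*r)) = - ln (t*r/a)" using r assms by (simp add: ln_div)
  ultimately have "- ln (t*r/a) \<le> a/(t*r) - 1" by simp
  then have "r * (- ln (t*r/a)) \<le> r * (a/(t*r) - 1)" using r by (intro mult_left_mono) auto
  also have "\<dots> = a/t - r" using r assms by (simp add: field_simps)
  finally show ?thesis by simp
qed

lemma KL_diff:
  fixes x y a :: "real^'n::finite"
  assumes "\<forall>k. a$k > 0" "\<forall>k. x$k \<ge> 0" "\<forall>k. y$k \<ge> 0" "\<forall>k. y$k > 0 \<or> y$k = x$k"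
  shows "KL y a - KL x a \<le> (\<Sum>k\<in>UNIV. (y$k - x$k) * ln (y$k/a$k))"
  unfolding KL_def sum_subtractf[symmetric]
  by (rule sum_mono) (use assms kterm in blast)

lemma row_nonneg: "nonneg_mat X \<Longrightarrow> row_sums X $ k \<ge> 0"
  unfolding nonneg_mat_def row_sums_def by (simp add: sum_nonneg)
lemma col_nonneg: "nonneg_mat X \<Longrightarrow> col_sums X $ k \<ge> 0"
  unfolding nonneg_mat_def col_sums_def by (simp add: sum_nonneg)

lemma g_diff:
  fixes C X Y :: "real^'n^'n::finite"
  assumes "\<tau> > 0" "\<forall>k. a$k > 0" "\<forall>k. b$k > 0" "nonneg_mat X" "nonneg_mat Y"
    "\<forall>k. row_sums Y$k > 0 \<or> row_sums Y$k = row_sums X$k"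
    "\<forall>k. col_sums Y$k > 0 \<or> col_sums Y$k = col_sums X$k"
  shows "g_eta C \<tau> \<eta> a b Y - g_eta C \<tau> \<eta> a b X \<le> (frob_inner C Y - frob_inner C X)
     + \<eta> * (frob_sq Y - frob_sq X)
     + \<tau> * (\<Sum>k\<in>UNIV. (row_sums Y$k - row_sums X$k) * ln (row_sums Y$k/a$k))
     + \<tau> * (\<Sum>k\<in>UNIV. (col_sums Y$k - col_sums X$k) * ln (col_sums Y$k/b$k))"
proof -
  have 1: "KL (row_sums Y) a - KL (row_sums X) a \<le> (\<Sum>k\<in>UNIV. (row_sums Y$k - row_sums X$k) * ln (row_sums Y$k/a$k))"
    using assms by (intro KL_diff) (auto simp: row_nonneg)
  have 2: "KL (col_sums Y) b - KL (col_sums X) b \<le> (\<Sum>k\<in>UNIV. (col_sums Y$k - col_sums X$k) * ln (col_sums Y$k/b$k))"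
    using assms by (intro KL_diff) (auto simp: col_nonneg)
  have "\<tau> * (KL (row_sums Y) a - KL (row_sums X) a) \<le> \<tau> * (\<Sum>k\<in>UNIV. (row_sums Y$k - row_sums X$k) * ln (row_sums Y$k/a$k))"
    using 1 assms(1) by (simp add: mult_left_mono)
  moreover have "\<tau> * (KL (col_sums Y) b - KL (col_sums X) b) \<le> \<tau> * (\<Sum>k\<in>UNIV. (col_sums Y$k - col_sums X$k) * ln (col_sums Y$k/b$k))"
    using 2 assms(1) by (simp add: mult_left_mono)
  ultimately show ?thesis unfolding g_eta_def by (simp add: algebra_simps)
qed

lemma max_ge: "C $ i $ j \<le> max_abs_norm C"
proof -
  have "{\<bar>C $ i $ j\<bar> | i j. True} = (\<lambda>(i,j). \<bar>C $ i $ j\<bar>) ` UNIV" by auto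
  then have "finite {\<bar>C $ i $ j\<bar> | i j. True}" by simp
  then have "\<bar>C $ i $ j\<bar> \<le> max_abs_norm C" unfolding max_abs_norm_def by (intro Max_ge) auto
  then show ?thesis by simp
qed

lemma sum_rc: "(\<Sum>k\<in>UNIV. col_sums X $ k) = (\<Sum>k\<in>UNIV. row_sums X $ k)"
  unfolding row_sums_def col_sums_def apply simp by (rule sum.swap)

lemma entry_le: "nonneg_mat X \<Longrightarrow> X $ i $ j \<le> (\<Sum>k\<in>UNIV. row_sums X $ k)"
proof -
  assume X: "nonneg_mat X"
  have "X $ i $ j \<le> row_sums X $ i" unfolding row_sums_def using X unfolding nonneg_mat_def
    by (simp add: member_le_sum)
  also have "\<dots> \<le> (\<Sum>k\<in>UNIV. row_sums X $ k)" using X by (intro member_le_sum) (auto simp: row_nonneg)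
  finally show ?thesis .
qed

lemma mass_le1:
  fixes C X :: "real^'n^'n::finite" and a b :: "real^'n" and \<tau> \<eta> :: real
  assumes C_nonneg: "nonneg_mat C"
    and tau_pos: "\<tau> > 0"
    and eta_pos: "\<eta> > 0"
    and a_simplex: "in_simplex a" and a_pos: "\<forall>i. a $ i > 0"
    and b_simplex: "in_simplex b" and b_pos: "\<forall>i. b $ i > 0"
    and X_nonneg: "nonneg_mat X"
    and X_min: "\<forall>Y. nonneg_mat Y \<longrightarrow> g_eta C \<tau> \<eta> a b X \<le> g_eta C \<tau> \<eta> a b Y"
  shows "(\<Sum>k\<in>UNIV. row_sums X $ k) \<le> 1"
proof -
  define s where "s = (\<Sum>k\<in>UNIV. row_sums X $ k)"
  have sa: "(\<Sum>k\<in>UNIV. a $ k) = 1" using a_simplex unfolding in_simplex_def by simp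
  have sb: "(\<Sum>k\<in>UNIV. b $ k) = 1" using b_simplex unfolding in_simplex_def by simp
  have key: "s * (1 - \<epsilon>) \<le> 1" if e: "0 < \<epsilon>" "\<epsilon> < 1" for \<epsilon>
  proof -
    define Y where "Y = (1 - \<epsilon>) *\<^sub>R X"
    have Yij: "Y $ i $ j = (1 - \<epsilon>) * X $ i $ j" for i j by (simp add: Y_def)
    have rY: "row_sums Y $ k = (1 - \<epsilon>) * row_sums X $ k" for k
      unfolding row_sums_def by (simp add: Yij sum_distrib_left)
    have cY: "col_sums Y $ k = (1 - \<epsilon>) * col_sums X $ k" for k
      unfolding col_sums_def by (simp add: Yij sum_distrib_left)
    have Ynn: "nonneg_mat Y" using X_nonneg e unfolding nonneg_mat_def by (simp add: Yij)
    have c1: "\<forall>k. row_sums Y$k > 0 \<or> row_sums Y$k = row_sums X$k"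
    proof
      fix k show "row_sums Y$k > 0 \<or> row_sums Y$k = row_sums X$k"
        using row_nonneg[OF X_nonneg, of k] e by (cases "row_sums X $ k = 0") (auto simp: rY)
    qed
    have c2: "\<forall>k. col_sums Y$k > 0 \<or> col_sums Y$k = col_sums X$k"
    proof
      fix k show "col_sums Y$k > 0 \<or> col_sums Y$k = col_sums X$k"
        using col_nonneg[OF X_nonneg, of k] e by (cases "col_sums X $ k = 0") (auto simp: cY)
    qed
    note gd = g_diff[OF tau_pos a_pos b_pos X_nonneg Ynn c1 c2, of C \<eta>]
    have gm: "g_eta C \<tau> \<eta> a b X \<le> g_eta C \<tau> \<eta> a b Y" using X_min Ynn by blast
    have fi0: "frob_inner C X \<ge> 0" using C_nonneg X_nonneg unfolding frob_inner_def nonneg_mat_def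
      by (intro sum_nonneg) simp
    have fiY: "frob_inner C Y = (1 - \<epsilon>) * frob_inner C X"
      unfolding frob_inner_def by (simp add: Yij sum_distrib_left algebra_simps)
    have "\<epsilon> * frob_inner C X \<ge> 0" using fi0 e by simp
    then have fi: "frob_inner C Y - frob_inner C X \<le> 0" using fiY by (simp add: algebra_simps)
    have fs0: "frob_sq X \<ge> 0" unfolding frob_sq_def by (intro sum_nonneg) simp
    have fsY: "frob_sq Y = (1 - \<epsilon>)^2 * frob_sq X"
      unfolding frob_sq_def by (simp add: Yij sum_distrib_left power_mult_distrib)
    have "(1 - \<epsilon>)^2 \<le> 1" using e by (simp add: power_le_one)
    then have "(1 - \<epsilon>)^2 * frob_sq X \<le> 1 * frob_sq X" using fs0 by (intro mult_right_mono) auto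
    then have fs: "\<eta> * (frob_sq Y - frob_sq X) \<le> 0" using eta_pos fsY
      by (simp add: mult_nonneg_nonpos)
    have lr: "(\<Sum>k\<in>UNIV. row_sums X$k * ln ((1-\<epsilon>) * row_sums X$k/a$k)) \<ge> s - 1/(1-\<epsilon>)"
    proof -
      have "(\<Sum>k\<in>UNIV. row_sums X$k * ln ((1-\<epsilon>) * row_sums X$k/a$k)) \<ge> (\<Sum>k\<in>UNIV. row_sums X$k - a$k/(1-\<epsilon>))"
        using a_pos e row_nonneg[OF X_nonneg] by (intro sum_mono rlog) auto
      also have "(\<Sum>k\<in>UNIV. row_sums X$k - a$k/(1-\<epsilon>)) = s - 1/(1-\<epsilon>)"
        by (simp add: s_def sum_subtractf sum_divide_distrib[symmetric] sa)
      finally show ?thesis .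
    qed
    have lc: "(\<Sum>k\<in>UNIV. col_sums X$k * ln ((1-\<epsilon>) * col_sums X$k/b$k)) \<ge> s - 1/(1-\<epsilon>)"
    proof -
      have "(\<Sum>k\<in>UNIV. col_sums X$k * ln ((1-\<epsilon>) * col_sums X$k/b$k)) \<ge> (\<Sum>k\<in>UNIV. col_sums X$k - b$k/(1-\<epsilon>))"
        using b_pos e col_nonneg[OF X_nonneg] by (intro sum_mono rlog) auto
      also have "(\<Sum>k\<in>UNIV. col_sums X$k - b$k/(1-\<epsilon>)) = s - 1/(1-\<epsilon>)"
        by (simp add: s_def sum_subtractf sum_divide_distrib[symmetric] sb sum_rc)
      finally show ?thesis .
    qed
    have Sr: "(\<Sum>k\<in>UNIV. (row_sums Y$k - row_sums X$k) * ln (row_sums Y$k/a$k))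
       = - \<epsilon> * (\<Sum>k\<in>UNIV. row_sums X$k * ln ((1-\<epsilon>) * row_sums X$k/a$k))"
      by (simp add: rY sum_distrib_left algebra_simps)
    have Sc: "(\<Sum>k\<in>UNIV. (col_sums Y$k - col_sums X$k) * ln (col_sums Y$k/b$k))
       = - \<epsilon> * (\<Sum>k\<in>UNIV. col_sums X$k * ln ((1-\<epsilon>) * col_sums X$k/b$k))"
      by (simp add: cY sum_distrib_left algebra_simps)
    have "0 \<le> \<tau> * (- \<epsilon> * (\<Sum>k\<in>UNIV. row_sums X$k * ln ((1-\<epsilon>) * row_sums X$k/a$k)))
           + \<tau> * (- \<epsilon> * (\<Sum>k\<in>UNIV. col_sums X$k * ln ((1-\<epsilon>) * col_sums X$k/b$k)))"
      using gd[unfolded Sr Sc] gm fi fs by linarith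
    then have "0 \<le> \<tau> * \<epsilon> * (- ((\<Sum>k\<in>UNIV. row_sums X$k * ln ((1-\<epsilon>) * row_sums X$k/a$k))
           + (\<Sum>k\<in>UNIV. col_sums X$k * ln ((1-\<epsilon>) * col_sums X$k/b$k))))"
      by (simp add: algebra_simps)
    then have "0 \<le> - ((\<Sum>k\<in>UNIV. row_sums X$k * ln ((1-\<epsilon>) * row_sums X$k/a$k))
           + (\<Sum>k\<in>UNIV. col_sums X$k * ln ((1-\<epsilon>) * col_sums X$k/b$k)))"
      using mult_pos_pos[OF tau_pos e(1)] by (simp add: zero_le_mult_iff)
    then have "s - 1/(1-\<epsilon>) \<le> 0" using lr lc by linarith
    then have "s \<le> 1/(1-\<epsilon>)" by simp
    then show ?thesis using e by (simp add: field_simps)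
  qed
  show ?thesis
  proof (rule ccontr)
    assume "\<not> ?thesis"
    then have s1: "s > 1" by (simp add: s_def)
    define \<epsilon> where "\<epsilon> = (s - 1) / (2 * s)"
    have e: "0 < \<epsilon>" "\<epsilon> < 1" using s1 by (auto simp: \<epsilon>_def field_simps)
    have "s * (1 - \<epsilon>) = (s + 1) / 2" using s1 by (simp add: \<epsilon>_def field_simps)
    then show False using key[OF e] s1 by simp
  qed
qed

lemma sum_delta2: "(\<Sum>p\<in>(UNIV::'n::finite set). \<Sum>q\<in>(UNIV::'m::finite set). if p = i \<and> q = j then v else (0::real)) = v"
proof -
  have "(\<Sum>q\<in>(UNIV::'m set). if p = i \<and> q = j then v else (0::real)) = (if p = i then v else 0)" for p
    by (cases "p = i") auto
  then show ?thesis by simp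
qed

lemma row_lower:
  fixes C X :: "real^'n^'n::finite" and a b :: "real^'n" and \<tau> \<eta> :: real
  assumes C_nonneg: "nonneg_mat C"
    and tau_pos: "\<tau> > 0"
    and eta_pos: "\<eta> > 0"
    and a_simplex: "in_simplex a" and a_pos: "\<forall>i. a $ i > 0"
    and b_simplex: "in_simplex b" and b_pos: "\<forall>i. b $ i > 0"
    and X_nonneg: "nonneg_mat X"
    and X_min: "\<forall>Y. nonneg_mat Y \<longrightarrow> g_eta C \<tau> \<eta> a b X \<le> g_eta C \<tau> \<eta> a b Y"
  shows "a $ i - row_sums X $ i \<le> a $ i * (max_abs_norm C + 2 * \<eta>) / \<tau>"
proof -
  define s where "s = (\<Sum>k\<in>UNIV. row_sums X $ k)"
  have s1: "s \<le> 1" unfolding s_def using mass_le1[OF assms] .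
  have sb: "(\<Sum>k\<in>UNIV. b $ k) = 1" using b_simplex unfolding in_simplex_def by simp
  obtain j where j: "col_sums X $ j \<le> b $ j"
  proof (rule ccontr)
    assume "\<not> thesis"
    then have "\<forall>j. col_sums X $ j > b $ j" using that by (meson not_le)
    then have "(\<Sum>k\<in>UNIV. b $ k) < (\<Sum>k\<in>UNIV. col_sums X $ k)" by (intro sum_strict_mono) auto
    then show False using s1 sb sum_rc[of X] by (simp add: s_def)
  qed
  define M where "M = max_abs_norm C"
  define r where "r = row_sums X $ i"
  define c where "c = col_sums X $ j"
  have ai: "a $ i > 0" and bj: "b $ j > 0" using a_pos b_pos by auto
  have X1: "X $ i $ j \<le> 1" using entry_le[OF X_nonneg, of i j] s1 by (simp add: s_def)
  have CM: "C $ i $ j \<le> M" unfolding M_def by (rule max_ge)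
  have Xij0: "X $ i $ j \<ge> 0" using X_nonneg unfolding nonneg_mat_def by simp
  have r0: "r \<ge> 0" unfolding r_def by (rule row_nonneg[OF X_nonneg])
  have c0: "c \<ge> 0" unfolding c_def by (rule col_nonneg[OF X_nonneg])
  have main: "\<tau> * a $ i - a $ i * (M + 2 * \<eta>) \<le> \<tau> * r + \<epsilon> * (\<tau> + a $ i * (\<eta> + \<tau> / b $ j))"
    if e: "\<epsilon> > 0" for \<epsilon>
  proof -
    define Y where "Y = (\<chi> p q. X $ p $ q + (if p = i \<and> q = j then \<epsilon> else 0))"
    have Yij: "Y $ p $ q = X $ p $ q + (if p = i \<and> q = j then \<epsilon> else 0)" for p q by (simp add: Y_def)
    have rY: "row_sums Y $ k = row_sums X $ k + (if k = i then \<epsilon> else 0)" for k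
      unfolding row_sums_def by (simp add: Yij sum.distrib)
    have cY: "col_sums Y $ k = col_sums X $ k + (if k = j then \<epsilon> else 0)" for k
      unfolding col_sums_def by (simp add: Yij sum.distrib)
    have Ynn: "nonneg_mat Y" using X_nonneg e unfolding nonneg_mat_def by (simp add: Yij)
    have c1: "\<forall>k. row_sums Y$k > 0 \<or> row_sums Y$k = row_sums X$k"
      using row_nonneg[OF X_nonneg] e by (auto simp: rY add_nonneg_pos)
    have c2: "\<forall>k. col_sums Y$k > 0 \<or> col_sums Y$k = col_sums X$k"
      using col_nonneg[OF X_nonneg] e by (auto simp: cY add_nonneg_pos)
    note gd = g_diff[OF tau_pos a_pos b_pos X_nonneg Ynn c1 c2, of C \<eta>]
    have gm: "g_eta C \<tau> \<eta> a b X \<le> g_eta C \<tau> \<eta> a b Y" using X_min Ynn by blast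
    have fi: "frob_inner C Y - frob_inner C X = \<epsilon> * C $ i $ j"
    proof -
      have "C$p$q * Y$p$q - C$p$q * X$p$q = (if p = i \<and> q = j then \<epsilon> * C$i$j else 0)" for p q
        by (auto simp: Yij algebra_simps)
      then show ?thesis unfolding frob_inner_def sum_subtractf[symmetric] by (simp add: sum_delta2)
    qed
    have fs: "frob_sq Y - frob_sq X = 2 * \<epsilon> * X $ i $ j + \<epsilon>^2"
    proof -
      have "(Y$p$q)^2 - (X$p$q)^2 = (if p = i \<and> q = j then 2 * \<epsilon> * X $ i $ j + \<epsilon>^2 else 0)" for p q
        by (auto simp: Yij algebra_simps power2_eq_square)
      then show ?thesis unfolding frob_sq_def sum_subtractf[symmetric] by (simp add: sum_delta2)
    qed
    have Sr: "(\<Sum>k\<in>UNIV. (row_sums Y$k - row_sums X$k) * ln (row_sums Y$k/a$k)) = \<epsilon> * ln ((r + \<epsilon>) / a $ i)"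
    proof -
      have "(row_sums Y$k - row_sums X$k) * ln (row_sums Y$k/a$k) = (if k = i then \<epsilon> * ln ((r + \<epsilon>) / a $ i) else 0)" for k
        by (auto simp: rY r_def)
      then show ?thesis by simp
    qed
    have Sc: "(\<Sum>k\<in>UNIV. (col_sums Y$k - col_sums X$k) * ln (col_sums Y$k/b$k)) = \<epsilon> * ln ((c + \<epsilon>) / b $ j)"
    proof -
      have "(col_sums Y$k - col_sums X$k) * ln (col_sums Y$k/b$k) = (if k = j then \<epsilon> * ln ((c + \<epsilon>) / b $ j) else 0)" for k
        by (auto simp: cY c_def)
      then show ?thesis by simp
    qed
    have "0 \<le> \<epsilon> * C $ i $ j + \<eta> * (2 * \<epsilon> * X $ i $ j + \<epsilon>^2) + \<tau> * (\<epsilon> * ln ((r + \<epsilon>) / a $ i))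
       + \<tau> * (\<epsilon> * ln ((c + \<epsilon>) / b $ j))"
      using gd[unfolded Sr Sc fi fs] gm by linarith
    then have "0 \<le> \<epsilon> * (C $ i $ j + \<eta> * (2 * X $ i $ j + \<epsilon>) + \<tau> * ln ((r + \<epsilon>) / a $ i)
       + \<tau> * ln ((c + \<epsilon>) / b $ j))"
      by (simp add: algebra_simps power2_eq_square)
    then have A: "0 \<le> C $ i $ j + \<eta> * (2 * X $ i $ j + \<epsilon>) + \<tau> * ln ((r + \<epsilon>) / a $ i)
       + \<tau> * ln ((c + \<epsilon>) / b $ j)"
      using e by (simp add: zero_le_mult_iff)
    have L1: "ln ((r + \<epsilon>) / a $ i) \<le> (r + \<epsilon>) / a $ i - 1"
      using r0 e ai by (intro ln_le_minus_one) simp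
    have L2: "ln ((c + \<epsilon>) / b $ j) \<le> (c + \<epsilon>) / b $ j - 1"
      using c0 e bj by (intro ln_le_minus_one) simp
    have "(c + \<epsilon>) / b $ j - 1 \<le> \<epsilon> / b $ j" using j bj by (simp add: c_def field_simps)
    with L2 have L2': "\<tau> * ln ((c + \<epsilon>) / b $ j) \<le> \<tau> * (\<epsilon> / b $ j)"
      using tau_pos by (intro mult_left_mono) auto
    have L1': "\<tau> * ln ((r + \<epsilon>) / a $ i) \<le> \<tau> * ((r + \<epsilon>) / a $ i - 1)"
      using L1 tau_pos by (intro mult_left_mono) auto
    have E: "\<eta> * (2 * X $ i $ j + \<epsilon>) \<le> \<eta> * (2 + \<epsilon>)"
      using eta_pos X1 by (intro mult_left_mono) auto
    have B: "0 \<le> M + \<eta> * (2 + \<epsilon>) + \<tau> * ((r + \<epsilon>) / a $ i - 1) + \<tau> * (\<epsilon> / b $ j)"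
      using A L1' L2' E CM by linarith
    then have "0 \<le> a $ i * (M + \<eta> * (2 + \<epsilon>) + \<tau> * ((r + \<epsilon>) / a $ i - 1) + \<tau> * (\<epsilon> / b $ j))"
      using ai by simp
    moreover have "a $ i * (M + \<eta> * (2 + \<epsilon>) + \<tau> * ((r + \<epsilon>) / a $ i - 1) + \<tau> * (\<epsilon> / b $ j))
       = a $ i * M + a $ i * \<eta> * 2 + \<epsilon> * (a $ i * \<eta>) + \<tau> * r + \<tau> * \<epsilon> - \<tau> * a $ i + \<epsilon> * (a $ i * (\<tau> / b $ j))"
      using ai by (simp add: algebra_simps add_divide_distrib)
    ultimately show ?thesis by (simp add: algebra_simps)
  qed
  have "\<tau> * a $ i - a $ i * (M + 2 * \<eta>) \<le> \<tau> * r"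
  proof (rule field_le_epsilon)
    fix e :: real assume e: "0 < e"
    define K where "K = \<tau> + a $ i * (\<eta> + \<tau> / b $ j)"
    have K: "K > 0" unfolding K_def using tau_pos ai bj eta_pos by (simp add: add_pos_pos)
    have "\<tau> * a $ i - a $ i * (M + 2 * \<eta>) \<le> \<tau> * r + (e / K) * K"
      using main[of "e / K"] e K by (simp add: K_def)
    then show "\<tau> * a $ i - a $ i * (M + 2 * \<eta>) \<le> \<tau> * r + e" using K by simp
  qed
  then show ?thesis using tau_pos by (simp add: M_def r_def field_simps)
qed

lemma M_nonneg: "max_abs_norm C \<ge> 0"
proof -
  have "\<bar>C $ i $ j\<bar> \<le> max_abs_norm C" for i j
  proof -
    have "{\<bar>C $ i $ j\<bar> | i j. True} = (\<lambda>(i,j). \<bar>C $ i $ j\<bar>) ` UNIV" by auto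
    then have "finite {\<bar>C $ i $ j\<bar> | i j. True}" by simp
    then show ?thesis unfolding max_abs_norm_def by (intro Max_ge) auto
  qed
  then show ?thesis by (meson abs_ge_zero order_trans)
qed

lemma row_bound:
  fixes C X :: "real^'n^'n::finite" and a b :: "real^'n" and \<tau> \<eta> :: real
  assumes C_nonneg: "nonneg_mat C"
    and tau_pos: "\<tau> > 0"
    and eta_pos: "\<eta> > 0"
    and a_simplex: "in_simplex a" and a_pos: "\<forall>i. a $ i > 0"
    and b_simplex: "in_simplex b" and b_pos: "\<forall>i. b $ i > 0"
    and X_nonneg: "nonneg_mat X"
    and X_min: "\<forall>Y. nonneg_mat Y \<longrightarrow> g_eta C \<tau> \<eta> a b X \<le> g_eta C \<tau> \<eta> a b Y"
  shows "norm1 (row_sums X - a) \<le> real CARD('n) * (max_abs_norm C + 2 * \<eta>) / \<tau>"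
proof -
  define G where "G = (max_abs_norm C + 2 * \<eta>) / \<tau>"
  have G0: "G \<ge> 0" unfolding G_def using M_nonneg[of C] eta_pos tau_pos by simp
  define r where "r = row_sums X"
  have sa: "(\<Sum>k\<in>UNIV. a $ k) = 1" using a_simplex unfolding in_simplex_def by simp
  have s1: "(\<Sum>k\<in>UNIV. r $ k) \<le> 1" unfolding r_def using mass_le1[OF assms] .
  have low: "a $ k - r $ k \<le> a $ k * G" for k
    using row_lower[OF assms, of k] by (simp add: r_def G_def)
  have a1: "a $ k \<le> 1" for k
  proof -
    have "a $ k \<le> (\<Sum>k\<in>UNIV. a $ k)" using a_pos by (intro member_le_sum) (auto simp: less_imp_le)
    then show ?thesis using sa by simp
  qed
  have pos: "max 0 (a $ k - r $ k) \<le> a $ k * G" for k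
    using low[of k] a_pos G0 by (simp add: less_imp_le)
  have spos: "(\<Sum>k\<in>UNIV. max 0 (a $ k - r $ k)) \<le> G"
  proof -
    have "(\<Sum>k\<in>UNIV. max 0 (a $ k - r $ k)) \<le> (\<Sum>k\<in>UNIV. a $ k * G)" by (intro sum_mono pos)
    also have "\<dots> = G" using sa by (simp add: sum_distrib_right[symmetric])
    finally show ?thesis .
  qed
  have each: "\<bar>r $ i - a $ i\<bar> \<le> G" for i
  proof -
    have "a $ i * G \<le> 1 * G" using a1[of i] G0 by (intro mult_right_mono) auto
    then have A: "a $ i - r $ i \<le> G" using low[of i] by simp
    have "(\<Sum>k\<in>UNIV. (a $ k - r $ k) + (if k = i then r $ i - a $ i else 0)) \<le> (\<Sum>k\<in>UNIV. max 0 (a $ k - r $ k))"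
      by (intro sum_mono) auto
    moreover have "(\<Sum>k\<in>UNIV. (a $ k - r $ k) + (if k = i then r $ i - a $ i else 0))
        = (\<Sum>k\<in>UNIV. a $ k) - (\<Sum>k\<in>UNIV. r $ k) + (r $ i - a $ i)"
      by (simp add: sum.distrib sum_subtractf)
    ultimately have "r $ i - a $ i \<le> G" using spos sa s1 by linarith
    then show ?thesis using A by linarith
  qed
  have "norm1 (row_sums X - a) = (\<Sum>k\<in>UNIV. \<bar>r $ k - a $ k\<bar>)" by (simp add: norm1_def r_def)
  also have "\<dots> \<le> (\<Sum>k\<in>(UNIV::'n set). G)" by (intro sum_mono each)
  also have "\<dots> = real CARD('n) * G" by simp
  finally show ?thesis by (simp add: G_def)
qed

lemma tr_comp: "transpose A $ i $ j = A $ j $ i" by (simp add: transpose_def)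

lemma g_tr: "g_eta (transpose C) \<tau> \<eta> b a (transpose Y) = g_eta C \<tau> \<eta> a b Y"
proof -
  have r: "row_sums (transpose Y) = col_sums Y" unfolding row_sums_def col_sums_def by (simp add: tr_comp)
  have c: "col_sums (transpose Y) = row_sums Y" unfolding row_sums_def col_sums_def by (simp add: tr_comp)
  have f: "frob_inner (transpose C) (transpose Y) = frob_inner C Y"
    unfolding frob_inner_def tr_comp by (rule sum.swap)
  have q: "frob_sq (transpose Y) = frob_sq Y"
    unfolding frob_sq_def tr_comp by (rule sum.swap)
  show ?thesis unfolding g_eta_def r c f q by simp
qed

lemma M_tr: "max_abs_norm (transpose C) = max_abs_norm C"
proof -
  have "{\<bar>transpose C $ i $ j\<bar> | i j. True} = {\<bar>C $ i $ j\<bar> | i j. True}" by (auto simp: tr_comp)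
  then show ?thesis unfolding max_abs_norm_def by simp
qed

lemma nn_tr: "nonneg_mat (transpose Y) = nonneg_mat Y"
  unfolding nonneg_mat_def tr_comp by auto

theorem mainTheorem12:
  fixes C X :: "real^'n^'n::finite" and a b :: "real^'n" and \<tau> \<eta> :: real
  assumes C_nonneg: "nonneg_mat C"
    and tau_pos: "\<tau> > 0"
    and eta_pos: "\<eta> > 0"
    and a_simplex: "in_simplex a" and a_pos: "\<forall>i. a $ i > 0"
    and b_simplex: "in_simplex b" and b_pos: "\<forall>i. b $ i > 0"
    and X_nonneg: "nonneg_mat X"
    and X_min: "\<forall>Y. nonneg_mat Y \<longrightarrow> g_eta C \<tau> \<eta> a b X \<le> g_eta C \<tau> \<eta> a b Y"
    and X_unique: "\<forall>Y. nonneg_mat Y \<and> g_eta C \<tau> \<eta> a b Y \<le> g_eta C \<tau> \<eta> a b X \<longrightarrow> Y = X"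
  shows "norm1 (row_sums X - a) \<le> real CARD('n) * (max_abs_norm C + 2 * \<eta>) / \<tau>
    \<and> norm1 (col_sums X - b) \<le> real CARD('n) * (max_abs_norm C + 2 * \<eta>) / \<tau>"
proof
  show "norm1 (row_sums X - a) \<le> real CARD('n) * (max_abs_norm C + 2 * \<eta>) / \<tau>"
    by (rule row_bound[OF C_nonneg tau_pos eta_pos a_simplex a_pos b_simplex b_pos X_nonneg X_min])
  have Xm: "\<forall>Y. nonneg_mat Y \<longrightarrow> g_eta (transpose C) \<tau> \<eta> b a (transpose X) \<le> g_eta (transpose C) \<tau> \<eta> b a Y"
  proof (intro allI impI)
    fix Y :: "real^'n^'n" assume Y: "nonneg_mat Y"
    have "g_eta (transpose C) \<tau> \<eta> b a Y = g_eta C \<tau> \<eta> a b (transpose Y)"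
      using g_tr[of C \<tau> \<eta> b a "transpose Y"] by simp
    moreover have "nonneg_mat (transpose Y)" using Y nn_tr by blast
    ultimately show "g_eta (transpose C) \<tau> \<eta> b a (transpose X) \<le> g_eta (transpose C) \<tau> \<eta> b a Y"
      using X_min g_tr[of C \<tau> \<eta> b a X] by simp
  qed
  have "norm1 (row_sums (transpose X) - b) \<le> real CARD('n) * (max_abs_norm (transpose C) + 2 * \<eta>) / \<tau>"
    by (rule row_bound[OF _ tau_pos eta_pos b_simplex b_pos a_simplex a_pos _ Xm])
       (auto simp: nn_tr C_nonneg X_nonneg)
  moreover have "row_sums (transpose X) = col_sums X" unfolding row_sums_def col_sums_def by (simp add: tr_comp)
  ultimately show "norm1 (col_sums X - b) \<le> real CARD('n) * (max_abs_norm C + 2 * \<eta>) / \<tau>"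
    by (simp add: M_tr)
qed

end
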